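(* Let $\varepsilon\ge 0$ be real and $p,q$ positive integers with $p/q\ge 2$. For every fractional $(p/q+\varepsilon)$-coloring $c$ of the Kneser graph $K_{p/q}$ there exists a vertex $v$ of $K_{p/q}$ such that the Lebesgue measure of $\bigcup_{u\in N(v)}c(u)$ is at least $p/q-1$, where $N(v)$ is the set of neighbors of $v$.
   Context: For integers $1\le q\le p$, the Kneser graph $K_{p/q}$ has as vertices all $q$-element subsets of $[p]$, two being adjacent iff they are disjoint. A fractional $m$-coloring of a graph (real $m>0$) assigns to each vertex a measurable subset of $[0,m)$ of Lebesgue measure one so that adjacent vertices receive disjoint sets. *)

theory Defs
  imports "HOL-Analysis.Analysis"
begin

definition kneser_vertices :: "nat \<Rightarrow> nat \<Rightarrow> nat set set" where
  "kneser_vertices p q = {A. A \<subseteq> {1..p} \<and> card A = q}"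

definition kneser_adj :: "nat \<Rightarrow> nat \<Rightarrow> nat set \<Rightarrow> nat set \<Rightarrow> bool" where
  "kneser_adj p q A B \<longleftrightarrow> A \<in> kneser_vertices p q \<and> B \<in> kneser_vertices p q \<and> A \<inter> B = {}"

definition kneser_nbhd :: "nat \<Rightarrow> nat \<Rightarrow> nat set \<Rightarrow> nat set set" where
  "kneser_nbhd p q v = {u. kneser_adj p q v u}"

definition fractional_coloring_kneser :: "nat \<Rightarrow> nat \<Rightarrow> real \<Rightarrow> (nat set \<Rightarrow> real set) \<Rightarrow> bool" where
  "fractional_coloring_kneser p q m c \<longleftrightarrow>
     (\<forall>v \<in> kneser_vertices p q.
        c v \<in> sets lebesgue \<and> c v \<subseteq> {0..<m} \<and> emeasure lebesgue (c v) = 1) \<and>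
     (\<forall>u v. kneser_adj p q u v \<longrightarrow> c u \<inter> c v = {})"

end

theory Submission imports Defs "HOL-Number_Theory.Cong" begin

lemma closure_all:
  fixes T :: "nat set"
  assumes "x0 \<in> T" "\<forall>x\<in>T. (x+1) mod p \<in> T" "x0 < p"
  shows "{..<p} \<subseteq> T"
proof -
  have all: "(x0 + n) mod p \<in> T" for n
  proof (induction n)
    case 0 then show ?case using assms by simp
  next
    case (Suc n)
    have "(x0 + Suc n) mod p = ((x0 + n) mod p + 1) mod p" by (simp add: mod_simps)
    then show ?case using Suc assms(2) by metis
  qed
  show ?thesis
  proof
    fix y assume "y \<in> {..<p}"
    then have "y = (x0 + (p - x0 + y)) mod p" using assms(3) by simp
    then show "y \<in> T" using all by metis
  qed
qed

lemma growth:
  fixes S :: "nat set"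
  assumes S: "S \<subseteq> {..<p}" "S \<noteq> {}"
  shows "L \<ge> 1 \<Longrightarrow> (\<lambda>(j,l). (j + r + l) mod p) ` (S \<times> {..<L}) = {..<p} \<or>
      card S + L - 1 \<le> card ((\<lambda>(j,l). (j + r + l) mod p) ` (S \<times> {..<L}))"
proof (induction L)
  case 0 then show ?case by simp
next
  case (Suc L)
  have p0: "p > 0" using S by auto
  have finS: "finite S" using S finite_subset by blast
  define T where "T = (\<lambda>(j,l). (j + r + l) mod p) ` (S \<times> {..<L})"
  define T' where "T' = (\<lambda>(j,l). (j + r + l) mod p) ` (S \<times> {..<Suc L})"
  have TT': "T \<subseteq> T'" unfolding T_def T'_def by auto
  have T'p: "T' \<subseteq> {..<p}" unfolding T'_def using p0 by auto
  have finT': "finite T'" using T'p finite_subset by blast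
  show ?case
  proof (cases "L = 0")
    case True
    have "T' = (\<lambda>j. (j + r) mod p) ` S" unfolding T'_def using True by force
    moreover have "inj_on (\<lambda>j. (j + r) mod p) S"
    proof
      fix x y assume xy: "x \<in> S" "y \<in> S" "(x + r) mod p = (y + r) mod p"
      then have "[x = y] (mod p)"
        by (metis cong_add_rcancel_nat cong_def)
      then show "x = y" using xy S cong_less_modulus_unique_nat by blast
    qed
    ultimately have "card T' = card S" by (simp add: card_image)
    then show ?thesis using True unfolding T'_def by simp
  next
    case False
    then have IH: "T = {..<p} \<or> card S + L - 1 \<le> card T" using Suc.IH unfolding T_def by simp
    show ?thesis
    proof (cases "T = {..<p}")
      case True
      then have "T' = {..<p}" using TT' T'p by blast
      then show ?thesis unfolding T'_def by simp
    next
      case Tne: False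
      then have cT: "card S + L - 1 \<le> card T" using IH by simp
      have Tp: "T \<subseteq> {..<p}" using TT' T'p by blast
      obtain j0 where j0: "j0 \<in> S" using S by auto
      have x0: "(j0 + r + 0) mod p \<in> T" unfolding T_def using j0 False by force
      have "\<exists>x\<in>T. (x+1) mod p \<notin> T"
      proof (rule ccontr)
        assume "\<not> ?thesis"
        then have "{..<p} \<subseteq> T" using closure_all[OF x0] p0 by auto
        then show False using Tne Tp by blast
      qed
      then obtain x where x: "x \<in> T" "(x+1) mod p \<notin> T" by blast
      from x(1) obtain j l where jl: "j \<in> S" "l < L" "x = (j + r + l) mod p" unfolding T_def by auto
      have "(x+1) mod p = (j + r + (l+1)) mod p" using jl by (simp add: mod_simps)
      then have "(x+1) mod p \<in> T'" unfolding T'_def using jl by force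
      then have "insert ((x+1) mod p) T \<subseteq> T'" using TT' by blast
      then have "card (insert ((x+1) mod p) T) \<le> card T'" using finT' card_mono by blast
      moreover have "finite T" using finT' TT' finite_subset by blast
      ultimately have "card T + 1 \<le> card T'" using x(2) by simp
      moreover have "card S > 0" using finS S by auto
      ultimately have "card S + Suc L - 1 \<le> card T'" using cT by linarith
      then show ?thesis unfolding T'_def by blast
    qed
  qed
qed

lemma arc_disj:
  fixes p q i j l :: nat
  assumes "2*q \<le> p" "l \<le> p - 2*q" "i = (j+q+l) mod p"
  shows "((\<lambda>a. (i+a) mod p + 1) ` {..<q}) \<inter> ((\<lambda>a. (j+a) mod p + 1) ` {..<q}) = {}"
proof (rule ccontr)
  assume "\<not> ?thesis"
  then obtain a b where ab: "a < q" "b < q" "(i+a) mod p = (j+b) mod p" by auto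
  then have "(j+q+l+a) mod p = (j+b) mod p" using assms(3) by (metis mod_add_left_eq)
  then have "[q+l+a = b] (mod p)"
    by (metis add.assoc cong_add_lcancel_nat cong_def)
  moreover have "q+l+a < p" "b < p" using assms ab by auto
  ultimately have "q+l+a = b" using cong_less_modulus_unique_nat by blast
  then show False using ab by simp
qed


lemma lm_integrable: "W \<in> lmeasurable \<Longrightarrow> integrable lebesgue (indicator W :: real \<Rightarrow> real)"
  by (auto intro!: integrable_real_indicator simp: fmeasurable_def)

theorem mainTheorem8:
  fixes \<epsilon> :: real and p q :: nat and c :: "nat set \<Rightarrow> real set"
  assumes "\<epsilon> \<ge> 0" and "p > 0" and "q > 0" and "real p / real q \<ge> 2"
    and "fractional_coloring_kneser p q (real p / real q + \<epsilon>) c"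
  shows "\<exists>v \<in> kneser_vertices p q.
           measure lebesgue (\<Union>u \<in> kneser_nbhd p q v. c u) \<ge> real p / real q - 1"
proof -
  have "real p \<ge> 2 * real q" using assms(3,4) by (simp add: field_simps)
  then have qp: "2*q \<le> p" by linarith
  define m where "m = real p / real q + \<epsilon>"
  have col: "\<And>v. v \<in> kneser_vertices p q \<Longrightarrow> c v \<in> sets lebesgue \<and> c v \<subseteq> {0..<m} \<and> emeasure lebesgue (c v) = 1"
    and adj: "\<And>u v. kneser_adj p q u v \<Longrightarrow> c u \<inter> c v = {}"
    using assms(5) unfolding fractional_coloring_kneser_def m_def by auto
  define A where "A i = (\<lambda>a. (i+a) mod p + 1) ` {..<q}" for i
  have Avert: "A i \<in> kneser_vertices p q" for i
  proof -
    have "A i \<subseteq> {1..p}" unfolding A_def using assms(2) by (auto simp: Suc_le_eq)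
    moreover have "inj_on (\<lambda>a. (i+a) mod p + 1) {..<q}"
    proof
      fix x y assume xy: "x \<in> {..<q}" "y \<in> {..<q}" "(i+x) mod p + 1 = (i+y) mod p + 1"
      then have "[x = y] (mod p)" by (metis add_right_cancel cong_add_lcancel_nat cong_def)
      moreover have "x < p" "y < p" using xy qp by auto
      ultimately show "x = y" using cong_less_modulus_unique_nat by blast
    qed
    then have "card (A i) = q" unfolding A_def by (simp add: card_image)
    ultimately show ?thesis unfolding kneser_vertices_def by simp
  qed
  have Adisj: "A i \<inter> A j = {}" if "l \<le> p - 2*q" "i = (j+q+l) mod p" for i j l
    using arc_disj[OF qp that] unfolding A_def by simp
  have Aadj: "kneser_adj p q (A i) (A j)" if "l \<le> p - 2*q" "i = (j+q+l) mod p" for i j l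
    using Adisj[OF that] Avert unfolding kneser_adj_def by simp
  have cdisj: "c (A i) \<inter> c (A j) = {}" if "l \<le> p - 2*q" "i = (j+q+l) mod p" for i j l
    using adj[OF Aadj[OF that]] .
  have finV: "finite (kneser_vertices p q)"
    by (rule finite_subset[of _ "Pow {1..p}"]) (auto simp: kneser_vertices_def)
  have lm: "X \<in> lmeasurable" if "X \<in> sets lebesgue" "X \<subseteq> {0..<m}" for X
  proof -
    have "bounded {0..m}" by (rule compact_imp_bounded) simp
    moreover have "X \<subseteq> {0..m}" using that(2) by auto
    ultimately have "bounded X" using bounded_subset by blast
    then show ?thesis using bounded_set_imp_lmeasurable that by blast
  qed
  define U where "U i = (\<Union>u \<in> kneser_nbhd p q (A i). c u)" for i
  define J where "J i = {j. j<p \<and> (\<exists>l\<le>p-2*q. i = (j+q+l) mod p)}" for i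
  define W where "W i = (\<Union>j \<in> J i. c (A j))" for i
  have nbV: "kneser_nbhd p q v \<subseteq> kneser_vertices p q" for v
    unfolding kneser_nbhd_def kneser_adj_def by auto
  have Ulm: "U i \<in> lmeasurable" for i
  proof -
    have fin: "finite (kneser_nbhd p q (A i))" using nbV finV finite_subset by blast
    have "U i \<in> sets lebesgue" unfolding U_def
      using fin col nbV by (intro sets.finite_UN) auto
    moreover have "U i \<subseteq> {0..<m}" unfolding U_def using col nbV by blast
    ultimately show ?thesis using lm by blast
  qed
  have Wlm: "W i \<in> lmeasurable" for i
  proof -
    have fin: "finite (J i)" unfolding J_def by auto
    have "W i \<in> sets lebesgue" unfolding W_def
      using fin col Avert by (intro sets.finite_UN) auto
    moreover have "W i \<subseteq> {0..<m}" unfolding W_def using col Avert by blast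
    ultimately show ?thesis using lm by blast
  qed
  have clm: "c (A j) \<in> lmeasurable" for j using lm col Avert by blast
  have cmeas: "measure lebesgue (c (A j)) = 1" for j
    using col[OF Avert] by (simp add: measure_def)
  have WU: "W i \<subseteq> U i" for i
  proof
    fix t assume "t \<in> W i"
    then obtain j l where "l \<le> p - 2*q" "i = (j+q+l) mod p" "t \<in> c (A j)"
      unfolding W_def J_def by auto
    then have "A j \<in> kneser_nbhd p q (A i)" "t \<in> c (A j)"
      using Aadj unfolding kneser_nbhd_def by auto
    then show "t \<in> U i" unfolding U_def by blast
  qed
  have pw: "(real p - real q)/real q * (\<Sum>j<p. indicator (c (A j)) t) \<le> (\<Sum>i<p. indicator (W i) t)"
    for t :: real
  proof -
    define S where "S = {j. j<p \<and> t \<in> c (A j)}"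
    define T where "T = (\<lambda>(j,l). (j + q + l) mod p) ` (S \<times> {..<p-2*q+1})"
    have e1: "(\<Sum>j<p. indicator (c (A j)) t :: real) = real (card S)"
    proof -
      have "(\<Sum>j<p. indicator (c (A j)) t :: real) = (\<Sum>j<p. indicator S j)"
        by (rule sum.cong) (auto simp: indicator_def S_def)
      also have "\<dots> = real (card ({..<p} \<inter> S))" by (simp add: indicator_def sum.If_cases)
      also have "{..<p} \<inter> S = S" unfolding S_def by auto
      finally show ?thesis .
    qed
    have TW: "{..<p} \<inter> {i. t \<in> W i} = T"
    proof
      show "{..<p} \<inter> {i. t \<in> W i} \<subseteq> T"
      proof
        fix i assume "i \<in> {..<p} \<inter> {i. t \<in> W i}"
        then obtain j l where "j < p" "l \<le> p-2*q" "i = (j+q+l) mod p" "t \<in> c (A j)"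
          unfolding W_def J_def by auto
        then show "i \<in> T" unfolding T_def S_def by force
      qed
    next
      show "T \<subseteq> {..<p} \<inter> {i. t \<in> W i}"
      proof
        fix i assume "i \<in> T"
        then obtain j l where "j \<in> S" "l < p-2*q+1" "i = (j+q+l) mod p" unfolding T_def by auto
        moreover then have "j \<in> J i" unfolding J_def S_def using less_Suc_eq_le by auto
        ultimately show "i \<in> {..<p} \<inter> {i. t \<in> W i}" using assms(2) unfolding W_def S_def by auto
      qed
    qed
    have e2: "(\<Sum>i<p. indicator (W i) t :: real) = real (card T)"
    proof -
      have "(\<Sum>i<p. indicator (W i) t :: real) = (\<Sum>i<p. indicator {i. t \<in> W i} i)"
        by (rule sum.cong) (auto simp: indicator_def)
      also have "\<dots> = real (card ({..<p} \<inter> {i. t \<in> W i}))" by (simp add: indicator_def sum.If_cases)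
      finally show ?thesis using TW by simp
    qed
    show ?thesis
    proof (cases "S = {}")
      case True
      then show ?thesis using e1 e2 by simp
    next
      case False
      have Sp: "S \<subseteq> {..<p}" unfolding S_def by auto
      have Tp: "T \<subseteq> {..<p}" using TW by blast
      have ST: "S \<inter> T = {}"
      proof (rule ccontr)
        assume "S \<inter> T \<noteq> {}"
        then obtain i where i: "i \<in> S" "i \<in> T" by auto
        then obtain j l where "j \<in> S" "l < p-2*q+1" "i = (j+q+l) mod p" unfolding T_def by auto
        then have "c (A i) \<inter> c (A j) = {}" using cdisj by simp
        then show False using i \<open>j \<in> S\<close> unfolding S_def by auto
      qed
      have "T \<noteq> {..<p}" using ST Sp False by blast
      then have g: "card S + (p-2*q+1) - 1 \<le> card T"
        using growth[OF Sp False, of "p-2*q+1" q] unfolding T_def by auto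
      have "card (S \<union> T) \<le> card {..<p}" using Sp Tp by (intro card_mono) auto
      moreover have "card (S \<union> T) = card S + card T"
        using ST Sp Tp by (intro card_Un_disjoint) (auto intro: finite_subset)
      ultimately have sum: "card S + card T \<le> p" by simp
      have kq: "card S \<le> q" using g sum qp by linarith
      have g2: "real (card S) + real p - 2 * real q \<le> real (card T)" using g qp by linarith
      have "(real p - 2*real q) * (real (card S) - real q) \<le> 0"
        using kq qp by (intro mult_nonneg_nonpos) auto
      then have "(real p - real q) * real (card S) \<le> real q * (real (card S) + real p - 2 * real q)"
        by (simp add: algebra_simps)
      also have "\<dots> \<le> real q * real (card T)" using g2 by (intro mult_left_mono) auto
      finally have "(real p - real q) * real (card S) / real q \<le> real (card T)"
        using assms(3) by (simp add: field_simps)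
      then show ?thesis using e1 e2 by simp
    qed
  qed
  have int1: "(\<Sum>i<p. measure lebesgue (W i)) = integral\<^sup>L lebesgue (\<lambda>t. \<Sum>i<p. indicator (W i) t)"
  proof -
    have "integral\<^sup>L lebesgue (\<lambda>t. \<Sum>i<p. indicator (W i) t) = (\<Sum>i<p. integral\<^sup>L lebesgue (indicator (W i) :: real \<Rightarrow> real))"
      using Wlm by (intro Bochner_Integration.integral_sum[where f="\<lambda>i. indicator (W i)"] lm_integrable)
    then show ?thesis by simp
  qed
  have int2: "real p = integral\<^sup>L lebesgue (\<lambda>t. \<Sum>j<p. indicator (c (A j)) t)"
  proof -
    have "integral\<^sup>L lebesgue (\<lambda>t. \<Sum>j<p. indicator (c (A j)) t) = (\<Sum>j<p. integral\<^sup>L lebesgue (indicator (c (A j)) :: real \<Rightarrow> real))"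
      using clm by (intro Bochner_Integration.integral_sum[where f="\<lambda>j. indicator (c (A j))"] lm_integrable)
    then show ?thesis using cmeas by simp
  qed
  have "real p * ((real p - real q)/real q) = integral\<^sup>L lebesgue (\<lambda>t. (real p - real q)/real q * (\<Sum>j<p. indicator (c (A j)) t))"
    using int2 by simp
  also have "\<dots> \<le> (\<Sum>i<p. measure lebesgue (W i))"
    unfolding int1
    using clm Wlm pw by (intro integral_mono Bochner_Integration.integrable_sum integrable_mult_right lm_integrable)
  also have "\<dots> \<le> (\<Sum>i<p. measure lebesgue (U i))"
    using WU Wlm Ulm by (intro sum_mono measure_mono_fmeasurable) auto
  finally have big: "real p * ((real p - real q)/real q) \<le> (\<Sum>i<p. measure lebesgue (U i))" .
  have "\<exists>i<p. measure lebesgue (U i) \<ge> (real p - real q)/real q"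
  proof (rule ccontr)
    assume "\<not> ?thesis"
    then have "\<forall>i\<in>{..<p}. measure lebesgue (U i) < (real p - real q)/real q" by auto
    then have "(\<Sum>i<p. measure lebesgue (U i)) < (\<Sum>i<p. (real p - real q)/real q)"
      using assms(2) by (intro sum_strict_mono) auto
    then show False using big by simp
  qed
  then obtain i where "measure lebesgue (U i) \<ge> (real p - real q)/real q" by blast
  moreover have "(real p - real q)/real q = real p / real q - 1" using assms(3) by (simp add: field_simps)
  ultimately show ?thesis using Avert[of i] unfolding U_def by auto
qed

end
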